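(* Let $p>2$ be a prime, $N\ge2$ an integer with $p\nmid N+1$, and $m\in\{1,2\}$. Then in $\mathbb{Z}_{(p)}[X]$ \[ \mathbb{HD}^{mp-1}_{N+1}(X)\equiv(-(N+1))^{mp-1}\sum_{i=0}^{\left[\frac{mp-1}{N+1}\right]}\frac{\big(1-mpH_{i(N+1)}\big)\prod_{j=1}^N\{\tfrac{j}{N+1}\}_i}{(i!)^N}X^{i(N+1)}\pmod{p^2}. \]
   Context: $\mathbb{HD}^P_M(X)=\sum_{i=0}^{[P/M]}c_i(-M)^{P-iM}X^{iM}$ with $c_i=\binom{P}{i}\binom{P-i}{i}\cdots\binom{P-(M-1)i}{i}$ (the Hasse--Dwork polynomial, printed as $(-M)^P(1+M!\sum_{i\ge1}\binom{P}{M\times i}(X/(-M))^{iM})$ with $M!\binom{P}{M\times i}=c_i$). $\{a\}_i=a(a+1)\cdots(a+i-1)$ for $i\ge1$ and $\{a\}_0=1$; $H_k=1+\frac12+\cdots+\frac1k$. For $i(N+1)\ge p$ one writes $pH_{i(N+1)}=1+p(H_{i(N+1)}-\frac1p)$, so all coefficients lie in $\mathbb{Z}_{(p)}$. *)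

theory Defs
  imports "HOL-Computational_Algebra.Polynomial" "HOL-Computational_Algebra.Primes"
begin

definition in_Zloc :: "nat \<Rightarrow> rat \<Rightarrow> bool" where
  "in_Zloc p q \<longleftrightarrow> \<not> (int p dvd snd (quotient_of q))"

definition poly_cong_mod_p2 :: "nat \<Rightarrow> rat poly \<Rightarrow> rat poly \<Rightarrow> bool" where
  "poly_cong_mod_p2 p A B \<longleftrightarrow>
     (\<forall>k. in_Zloc p ((coeff A k - coeff B k) / (of_nat p)^2))"

definition HD_coeff :: "nat \<Rightarrow> nat \<Rightarrow> nat \<Rightarrow> nat" where
  "HD_coeff P M i = (\<Prod>k<M. (P - k * i) choose i)"

definition HD :: "nat \<Rightarrow> nat \<Rightarrow> rat poly" where
  "HD P M = (\<Sum>i = 0..P div M.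
      monom (of_nat (HD_coeff P M i) * (- of_nat M) ^ (P - i * M)) (i * M))"

definition Hnum :: "nat \<Rightarrow> rat" where
  "Hnum k = (\<Sum>j = 1..k. 1 / of_nat j)"

end

theory Submission
  imports Defs
begin


definition zl :: "nat \<Rightarrow> rat \<Rightarrow> bool" where
  "zl p q \<longleftrightarrow> (\<exists>a b::int. b \<noteq> 0 \<and> \<not> int p dvd b \<and> q = of_int a / of_int b)"

lemma in_Zloc_zl: "in_Zloc p q \<longleftrightarrow> zl p q"
proof
  assume "in_Zloc p q"
  obtain n d where nd: "quotient_of q = (n, d)" by (cases "quotient_of q") auto
  then show "zl p q" using \<open>in_Zloc p q\<close> quotient_of_div[OF nd] quotient_of_denom_pos[OF nd]
    unfolding zl_def in_Zloc_def by (intro exI[of _ n] exI[of _ d]) auto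
next
  assume "zl p q"
  then obtain a b :: int where ab: "b \<noteq> 0" "\<not> int p dvd b" "q = of_int a / of_int b"
    unfolding zl_def by blast
  obtain n d where nd: "quotient_of q = (n, d)" by (cases "quotient_of q") auto
  have d0: "d > 0" using quotient_of_denom_pos[OF nd] .
  have cop: "coprime n d" using quotient_of_coprime[OF nd] .
  have "of_int n / of_int d = (of_int a / of_int b :: rat)" using quotient_of_div[OF nd] ab by simp
  then have "of_int (n * b) = (of_int (a * d) :: rat)" using d0 ab(1) by (simp add: field_simps)
  then have e: "n * b = a * d" by linarith
  have "d dvd n * b" using e by simp
  then have "d dvd b" using cop by (metis coprime_commute coprime_dvd_mult_right_iff coprime_dvd_mult_left_iff)
  then have "\<not> int p dvd d" using ab(2) dvd_trans by blast
  then show "in_Zloc p q" unfolding in_Zloc_def nd by simp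
qed

lemma zl_int: "prime p \<Longrightarrow> zl p (of_int a)"
  unfolding zl_def by (intro exI[of _ a] exI[of _ 1]) (auto simp: prime_gt_1_nat)

lemma zl_nat: "prime p \<Longrightarrow> zl p (of_nat a)"
  using zl_int[of p "int a"] by simp

lemma zl_0: "prime p \<Longrightarrow> zl p 0" and zl_1: "prime p \<Longrightarrow> zl p 1"
  using zl_int[of p 0] zl_int[of p 1] by simp_all

lemma zl_add:
  assumes "prime p" "zl p x" "zl p y" shows "zl p (x + y)"
proof -
  obtain a b where ab: "b \<noteq> 0" "\<not> int p dvd b" "x = of_int a / of_int b" using assms(2) unfolding zl_def by blast
  obtain c d where cd: "d \<noteq> 0" "\<not> int p dvd d" "y = of_int c / of_int d" using assms(3) unfolding zl_def by blast
  have pr: "prime (int p)" using assms(1) by simp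
  have "\<not> int p dvd b * d" using ab cd pr by (simp add: prime_dvd_mult_iff)
  moreover have "x + y = of_int (a * d + c * b) / of_int (b * d)" using ab cd by (simp add: field_simps)
  ultimately show ?thesis unfolding zl_def using ab cd by (intro exI[of _ "a * d + c * b"] exI[of _ "b * d"]) auto
qed

lemma zl_mult:
  assumes "prime p" "zl p x" "zl p y" shows "zl p (x * y)"
proof -
  obtain a b where ab: "b \<noteq> 0" "\<not> int p dvd b" "x = of_int a / of_int b" using assms(2) unfolding zl_def by blast
  obtain c d where cd: "d \<noteq> 0" "\<not> int p dvd d" "y = of_int c / of_int d" using assms(3) unfolding zl_def by blast
  have pr: "prime (int p)" using assms(1) by simp
  have "\<not> int p dvd b * d" using ab cd pr by (simp add: prime_dvd_mult_iff)
  moreover have "x * y = of_int (a * c) / of_int (b * d)" using ab cd by (simp add: field_simps)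
  ultimately show ?thesis unfolding zl_def using ab cd by (intro exI[of _ "a * c"] exI[of _ "b * d"]) auto
qed

lemma zl_uminus: "zl p x \<Longrightarrow> zl p (- x)"
  unfolding zl_def by (metis minus_divide_left of_int_minus)

lemma zl_diff: "prime p \<Longrightarrow> zl p x \<Longrightarrow> zl p y \<Longrightarrow> zl p (x - y)"
  using zl_add[of p x "-y"] zl_uminus[of p y] by simp

lemma zl_inv_nat: "\<not> p dvd n \<Longrightarrow> zl p (1 / of_nat n)"
  unfolding zl_def by (intro exI[of _ 1] exI[of _ "int n"]) (auto simp: of_nat_dvd_iff intro!: Nat.gr0I)

lemma zl_sum: "prime p \<Longrightarrow> (\<And>i. i \<in> S \<Longrightarrow> zl p (f i)) \<Longrightarrow> zl p (sum f S)"
  by (induction S rule: infinite_finite_induct) (auto intro: zl_add zl_0)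

lemma zl_prod: "prime p \<Longrightarrow> (\<And>i. i \<in> S \<Longrightarrow> zl p (f i)) \<Longrightarrow> zl p (prod f S)"
  by (induction S rule: infinite_finite_induct) (auto intro: zl_mult zl_1)

lemma zl_pow: "prime p \<Longrightarrow> zl p x \<Longrightarrow> zl p (x ^ n)"
  by (induction n) (auto intro: zl_mult zl_1)



lemma HD_coeff_fact:
  "M * i \<le> P \<Longrightarrow> HD_coeff P M i * fact (P - M * i) * fact i ^ M = (fact P :: nat)"
proof (induction M)
  case 0
  then show ?case by (simp add: HD_coeff_def)
next
  case (Suc M)
  have le: "i \<le> P - M * i" using Suc.prems by simp
  have IH: "HD_coeff P M i * fact (P - M * i) * fact i ^ M = (fact P :: nat)"
    using Suc by simp
  have b: "fact i * fact (P - M * i - i) * ((P - M * i) choose i) = (fact (P - M * i) :: nat)"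
    using binomial_fact_lemma[OF le] .
  have "HD_coeff P (Suc M) i = HD_coeff P M i * ((P - M * i) choose i)"
    by (simp add: HD_coeff_def)
  moreover have "P - Suc M * i = P - M * i - i" by simp
  ultimately have "HD_coeff P (Suc M) i * fact (P - Suc M * i) * fact i ^ Suc M
      = HD_coeff P M i * (fact i * fact (P - M * i - i) * ((P - M * i) choose i)) * fact i ^ M"
    by (simp add: algebra_simps)
  also have "\<dots> = fact P" using b IH by simp
  finally show ?case .
qed

lemma binom_step: "Suc k * (n choose Suc k) = (n - k) * (n choose k)"
  using times_binomial_minus1_eq[of "Suc k" n] binomial_absorb_comp[of n k] by simp

lemma binom_prod:
  "k \<le> n \<Longrightarrow> (of_nat (n choose k) :: rat) = (\<Prod>j=1..k. (of_nat n + 1 - of_nat j) / of_nat j)"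
proof (induction k)
  case 0
  then show ?case by simp
next
  case (Suc k)
  have "(of_nat (Suc k) :: rat) * of_nat (n choose Suc k) = of_nat (n - k) * of_nat (n choose k)"
    using binom_step[of k n] by (metis of_nat_mult)
  then have "(of_nat (n choose Suc k) :: rat) = of_nat (n choose k) * (of_nat n - of_nat k) / of_nat (Suc k)"
    using Suc.prems by (simp add: field_simps of_nat_diff)
  also have "\<dots> = (\<Prod>j=1..Suc k. (of_nat n + 1 - of_nat j) / of_nat j)"
    using Suc by (simp add: prod.nat_ivl_Suc' field_simps)
  finally show ?case .
qed

lemma fact_add_prod: "(fact (a + b) :: rat) = fact a * (\<Prod>j=1..b. of_nat (a + j))"
  by (induction b) (simp_all add: prod.nat_ivl_Suc' algebra_simps)

lemma poch_prod:
  fixes N i :: nat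
  shows "(\<Prod>j=1..N. pochhammer (of_nat j / of_nat (N+1)) i) * fact i * of_nat (N+1) ^ (i*(N+1))
     = (fact (i*(N+1)) :: rat)"
proof (induction i)
  case 0
  then show ?case by simp
next
  case (Suc i)
  define M where "M = N + 1"
  have M0: "(of_nat M :: rat) \<noteq> 0" by (simp add: M_def)
  have IH: "(\<Prod>j=1..N. pochhammer (of_nat j / of_nat M) i) * fact i * of_nat M ^ (i*M) = (fact (i*M) :: rat)"
    using Suc.IH by (simp add: M_def)
  have "(\<Prod>j=1..N. (of_nat j / of_nat M + of_nat i :: rat)) * of_nat M ^ N
      = (\<Prod>j=1..N. (of_nat j / of_nat M + of_nat i) * of_nat M)"
    by (simp add: prod.distrib)
  also have "\<dots> = (\<Prod>j=1..N. of_nat (i * M + j))"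
    using M0 by (intro prod.cong) (simp_all add: field_simps)
  finally have P1: "(\<Prod>j=1..N. (of_nat j / of_nat M + of_nat i :: rat)) * of_nat M ^ N = (\<Prod>j=1..N. of_nat (i * M + j))" .
  have F: "(fact (Suc i * M) :: rat) = fact (i*M) * (\<Prod>j=1..N. of_nat (i * M + j)) * of_nat (i*M + M)"
    using fact_add_prod[of "i*M" M] by (simp add: M_def prod.nat_ivl_Suc' algebra_simps)
  have e1: "(\<Prod>j=1..N. pochhammer (of_nat j / of_nat M) (Suc i)) = (\<Prod>j=1..N. pochhammer (of_nat j / of_nat M) i) * (\<Prod>j=1..N. (of_nat j / of_nat M + of_nat i :: rat))"
    by (simp add: pochhammer_Suc prod.distrib)
  have e2: "(of_nat M :: rat) ^ (Suc i*M) = of_nat M ^ (i*M) * of_nat M ^ N * of_nat M"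
    by (simp add: M_def power_add algebra_simps)
  have e3: "(fact (Suc i) :: rat) = fact i * of_nat (Suc i)" by simp
  have "(\<Prod>j=1..N. pochhammer (of_nat j / of_nat M) (Suc i)) * fact (Suc i) * of_nat M ^ (Suc i*M)
      = ((\<Prod>j=1..N. pochhammer (of_nat j / of_nat M) i) * fact i * of_nat M ^ (i*M))
        * ((\<Prod>j=1..N. (of_nat j / of_nat M + of_nat i :: rat)) * of_nat M ^ N) * (of_nat (Suc i) * of_nat M)"
    unfolding e1 e2 e3 by (simp only: mult_ac)
  also have "\<dots> = fact (i*M) * (\<Prod>j=1..N. of_nat (i * M + j)) * (of_nat (Suc i) * of_nat M)" using IH P1 by simp
  also have "\<dots> = fact (Suc i * M)" unfolding F by (simp add: algebra_simps)
  finally show ?case by (simp add: M_def)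
qed



lemma prod_approx:
  fixes k :: nat and x :: "nat \<Rightarrow> rat"
  shows "prime p \<Longrightarrow> (\<And>j. j \<in> {1..k} \<Longrightarrow> zl p (x j / of_nat p)) \<Longrightarrow>
   zl p (((\<Prod>j=1..k. (1 - x j)) - (1 - (\<Sum>j=1..k. x j))) / of_nat p ^ 2)"
proof (induction k)
  case 0
  then show ?case using zl_0 by simp
next
  case (Suc k)
  have p: "prime p" using Suc by simp
  define P where "P = (\<Prod>j=1..k. (1 - x j))"
  define S where "S = (\<Sum>j=1..k. x j)"
  define E where "E = P - (1 - S)"
  have p0: "(of_nat p :: rat) \<noteq> 0" using p by (simp add: prime_gt_0_nat)
  have IH: "zl p (E / of_nat p ^ 2)" unfolding E_def P_def S_def using Suc by auto
  have xs: "zl p (x (Suc k) / of_nat p)" using Suc.prems by simp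
  have xz: "zl p (x (Suc k))"
  proof -
    have "x (Suc k) = of_nat p * (x (Suc k) / of_nat p)" using p0 by simp
    then show ?thesis using zl_mult[OF p zl_nat[OF p] xs] by metis
  qed
  have Sz: "zl p (S / of_nat p)" unfolding S_def sum_divide_distrib
    using Suc.prems by (intro zl_sum[OF p]) auto
  have "((\<Prod>j=1..Suc k. (1 - x j)) - (1 - (\<Sum>j=1..Suc k. x j))) / of_nat p ^ 2
      = (E / of_nat p ^ 2) * (1 - x (Suc k)) + (S / of_nat p) * (x (Suc k) / of_nat p)"
    unfolding E_def P_def S_def using p0 by (simp add: field_simps power2_eq_square)
  moreover have "zl p \<dots>"
    using IH xz xs Sz by (intro zl_add[OF p] zl_mult[OF p] zl_diff[OF p] zl_1[OF p]) auto
  ultimately show ?case by simp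
qed

lemma lemmaA:
  assumes p: "prime p" and kp: "k < p" and m: "m \<ge> 1"
  shows "zl p ((of_nat (m*p-1 choose k) - (-1)^k * (1 - of_nat (m*p) * Hnum k)) / of_nat p ^ 2)"
proof -
  define x where "x j = (of_nat (m*p) / of_nat j :: rat)" for j
  have "p \<le> m*p" using m by simp
  then have kn: "k \<le> m*p - 1" using kp by linarith
  have n1: "(of_nat (m*p-1) :: rat) + 1 = of_nat (m*p)"
    using m p by (simp add: of_nat_diff prime_gt_0_nat Suc_leI)
  have "(of_nat (m*p-1 choose k) :: rat) = (\<Prod>j=1..k. (of_nat (m*p-1) + 1 - of_nat j) / of_nat j)"
    using binom_prod[OF kn] .
  also have "\<dots> = (\<Prod>j=1..k. (-1) * (1 - x j))"
    unfolding n1 x_def by (intro prod.cong) (auto simp: field_simps)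
  also have "\<dots> = (\<Prod>j=1..k. (-1::rat)) * (\<Prod>j=1..k. (1 - x j))"
    by (rule prod.distrib)
  also have "\<dots> = (-1)^k * (\<Prod>j=1..k. (1 - x j))"
    by simp
  finally have b: "(of_nat (m*p-1 choose k) :: rat) = (-1)^k * (\<Prod>j=1..k. (1 - x j))" .
  have h: "of_nat (m*p) * Hnum k = (\<Sum>j=1..k. x j)"
    unfolding Hnum_def x_def by (simp add: sum_distrib_left)
  have xz: "zl p (x j / of_nat p)" if "j \<in> {1..k}" for j
  proof -
    have "\<not> p dvd j" using that kp by (auto dest: dvd_imp_le)
    have "x j / of_nat p = of_nat m * (1 / of_nat j)" unfolding x_def using p
      by (simp add: field_simps prime_gt_0_nat)
    then show ?thesis using zl_mult[OF p zl_nat[OF p] zl_inv_nat[OF \<open>\<not> p dvd j\<close>]] by metis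
  qed
  have D: "(of_nat (m*p-1 choose k) - (-1)^k * (1 - of_nat (m*p) * Hnum k))
     = (-1)^k * ((\<Prod>j=1..k. (1 - x j)) - (1 - (\<Sum>j=1..k. x j)))"
    unfolding b h by (simp add: algebra_simps)
  have "(of_nat (m*p-1 choose k) - (-1)^k * (1 - of_nat (m*p) * Hnum k)) / of_nat p ^ 2
     = (-1)^k * (((\<Prod>j=1..k. (1 - x j)) - (1 - (\<Sum>j=1..k. x j))) / of_nat p ^ 2)"
    unfolding D by simp
  moreover have "zl p ((-1)^k * (((\<Prod>j=1..k. (1 - x j)) - (1 - (\<Sum>j=1..k. x j))) / of_nat p ^ 2))"
    using zl_mult[OF p zl_pow[OF p zl_int[OF p, of "-1"]] prod_approx[OF p xz]] by simp
  ultimately show ?thesis by (simp only:)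
qed



definition sgnp :: "nat \<Rightarrow> nat \<Rightarrow> rat" where
  "sgnp p k = (if k < p then (-1)^k else (-1)^(k-1))"

lemma lemmaC1:
  fixes p k :: nat
  shows "prime p \<Longrightarrow> k \<le> 2*p - 1 \<Longrightarrow>
    zl p (((\<Prod>j=1..k. (of_nat (2*p) - of_nat j) / of_nat j) - sgnp p k) / of_nat p)"
proof (induction k)
  case 0
  then show ?case by (simp add: sgnp_def zl_0)
next
  case (Suc k)
  have p: "prime p" using Suc by simp
  have p0: "(of_nat p :: rat) \<noteq> 0" using p by (simp add: prime_gt_0_nat)
  define P where "P = (\<Prod>j=1..k. (of_nat (2*p) - of_nat j) / (of_nat j :: rat))"
  define f where "f = (of_nat (2*p) - of_nat (Suc k)) / (of_nat (Suc k) :: rat)"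
  have IH: "zl p ((P - sgnp p k) / of_nat p)" unfolding P_def using Suc by simp
  have PS: "(\<Prod>j=1..Suc k. (of_nat (2*p) - of_nat j) / of_nat j) = P * f"
    unfolding P_def f_def by (simp add: prod.nat_ivl_Suc')
  show ?case
  proof (cases "Suc k = p")
    case True
    then have "f = 1" unfolding f_def by simp
    moreover have "sgnp p (Suc k) = sgnp p k" unfolding sgnp_def by (simp add: True[symmetric])
    ultimately show ?thesis using IH PS by simp
  next
    case False
    have nd: "\<not> p dvd Suc k"
    proof
      assume "p dvd Suc k"
      then obtain c where c: "Suc k = p * c" by blast
      have "c \<noteq> 0" using c by (metis mult_0_right nat.simps(3))
      have "Suc k < 2*p" using Suc.prems by simp
      then have "p * c < p * 2" using c by (simp add: mult.commute)
      then have "c < 2" by simp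
      then have "c = 1" using \<open>c \<noteq> 0\<close> by simp
      then show False using c False by simp
    qed
    have sk0: "(of_nat (Suc k) :: rat) \<noteq> 0" by (simp only: of_nat_eq_0_iff nat.simps(3) not_False_eq_True)
    have "f + 1 = of_nat p * (2 * (1 / of_nat (Suc k)))"
      unfolding f_def using sk0 by (simp add: field_simps)
    then have f1: "(f + 1) / of_nat p = 2 * (1 / of_nat (Suc k))"
      using p0 by simp
    have zf1: "zl p ((f + 1) / of_nat p)"
      unfolding f1 using zl_mult[OF p zl_nat[OF p, of 2] zl_inv_nat[OF nd]] by simp
    have zf: "zl p f"
    proof -
      have "f = of_nat p * ((f + 1) / of_nat p) - 1" using p0 by simp
      then show ?thesis using zl_diff[OF p zl_mult[OF p zl_nat[OF p] zf1] zl_1[OF p]] by metis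
    qed
    have ss: "sgnp p (Suc k) = - sgnp p k"
      unfolding sgnp_def using False prime_gt_1_nat[OF p]
      by (cases k) auto
    have "((P * f) - sgnp p (Suc k)) / of_nat p
        = ((P - sgnp p k) / of_nat p) * f + sgnp p k * ((f + 1) / of_nat p)"
      unfolding ss using p0 by (simp add: field_simps)
    moreover have "zl p (sgnp p k)" unfolding sgnp_def
      using zl_pow[OF p zl_int[OF p, of "-1"]] by simp
    moreover have "zl p (((P - sgnp p k) / of_nat p) * f + sgnp p k * ((f + 1) / of_nat p))"
      using IH zf zf1 \<open>zl p (sgnp p k)\<close> by (intro zl_add[OF p] zl_mult[OF p])
    ultimately have "zl p (((P * f) - sgnp p (Suc k)) / of_nat p)"
      by (simp only:)
    then show ?thesis using PS by simp
  qed
qed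

lemma lemmaC:
  fixes p k :: nat
  assumes p: "prime p" and pk: "p \<le> k" and k2: "k \<le> 2*p - 1"
  shows "zl p ((of_nat (2*p-1 choose k) - (-1)^k * (1 - of_nat (2*p) * Hnum k)) / of_nat p)"
proof -
  have p0: "(of_nat p :: rat) \<noteq> 0" using p by (simp add: prime_gt_0_nat)
  have p1: "p \<ge> 1" using p by (simp add: prime_gt_0_nat Suc_leI)
  have n1: "(of_nat (2*p-1) :: rat) + 1 = of_nat (2*p)" using p1 by (simp add: of_nat_diff)
  have b: "(of_nat (2*p-1 choose k) :: rat) = (\<Prod>j=1..k. (of_nat (2*p) - of_nat j) / of_nat j)"
    using binom_prod[OF k2] unfolding n1 .
  define s where "s = ((-1)^(k-1) :: rat)"
  have sg: "sgnp p k = s" unfolding sgnp_def s_def using pk by simp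
  have kk: "k = Suc (k - 1)" using pk p1 by simp
  have sk: "(-1)^k = - s" unfolding s_def by (subst kk) simp
  define T where "T = (\<Sum>j\<in>{1..k}-{p}. 1 / (of_nat j :: rat))"
  have H: "Hnum k = 1 / of_nat p + T" unfolding Hnum_def T_def
    using pk p1 by (subst sum.remove[of _ p]) auto
  have zT: "zl p T" unfolding T_def
  proof (rule zl_sum[OF p])
    fix j assume j: "j \<in> {1..k} - {p}"
    have "\<not> p dvd j"
    proof
      assume "p dvd j"
      then obtain c where c: "j = p * c" by blast
      have "c \<noteq> 0" using c j by auto
      have "j < 2*p" using j k2 p1 by auto
      then have "p * c < p * 2" using c by (simp add: mult.commute)
      then have "c < 2" by simp
      moreover note \<open>c \<noteq> 0\<close>
      ultimately have "c = 1" by simp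
      then show False using c j by simp
    qed
    then show "zl p (1 / of_nat j)" by (rule zl_inv_nat)
  qed
  have D: "of_nat (2*p-1 choose k) - (-1)^k * (1 - of_nat (2*p) * Hnum k)
     = (of_nat (2*p-1 choose k) - s) - of_nat p * (2 * s * T)"
    unfolding sk H using p0 by (simp add: field_simps)
  have eqn: "(of_nat (2*p-1 choose k) - (-1)^k * (1 - of_nat (2*p) * Hnum k)) / of_nat p
     = (of_nat (2*p-1 choose k) - s) / of_nat p - 2 * s * T"
    unfolding D using p0 by (simp add: field_simps)
  have z1: "zl p ((of_nat (2*p-1 choose k) - s) / of_nat p)"
    using lemmaC1[OF p k2] unfolding b sg .
  have zs: "zl p s" unfolding s_def using zl_pow[OF p zl_int[OF p, of "-1"]] by simp
  have z2: "zl p (2 * s * T)"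
    using zl_mult[OF p zl_mult[OF p zl_nat[OF p, of 2] zs] zT] by simp
  show ?thesis unfolding eqn by (rule zl_diff[OF p z1 z2])
qed



lemma key:
  fixes p N m i :: nat
  assumes p: "prime p" and N: "N \<ge> 2" and m: "m \<in> {1, 2}"
    and i: "i \<le> (m * p - 1) div (N + 1)"
  shows "zl p ((of_nat (HD_coeff (m * p - 1) (N + 1) i) * (- of_nat (N + 1)) ^ (m * p - 1 - i * (N + 1))
     - (- of_nat (N + 1)) ^ (m * p - 1) *
       ((1 - of_nat (m * p) * Hnum (i * (N + 1))) *
        (\<Prod>j = 1..N. pochhammer (of_nat j / of_nat (N + 1)) i) / (fact i) ^ N)) / of_nat p ^ 2)"
proof -
  define P where "P = m * p - 1"
  define M where "M = N + 1"
  define k where "k = i * M"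
  define Q where "Q = HD_coeff k M i"
  define X where "X = (of_nat (P choose k) - (-1)^k * (1 - of_nat (m*p) * Hnum k) :: rat)"
  have p0: "(of_nat p :: rat) \<noteq> 0" using p by (simp add: prime_gt_0_nat)
  have M0: "(of_nat M :: rat) \<noteq> 0" by (simp add: M_def)
  have kP: "k \<le> P" unfolding k_def P_def M_def using i
    by (metis div_times_less_eq_dividend le_trans mult_le_mono1)
  have f1: "HD_coeff P M i * fact (P - M * i) * fact i ^ M = (fact P :: nat)"
    using HD_coeff_fact[of M i P] kP by (simp add: k_def mult.commute)
  have f2: "Q * fact i ^ M = (fact k :: nat)"
    using HD_coeff_fact[of M i k] unfolding Q_def by (simp add: k_def mult.commute)
  have f3: "fact k * fact (P - k) * (P choose k) = (fact P :: nat)"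
    using binomial_fact_lemma[OF kP] .
  have HQ: "HD_coeff P M i = (P choose k) * Q"
  proof -
    have a: "HD_coeff P M i * (fact (P - k) * fact i ^ M) = fact P"
      using f1 by (simp add: k_def mult.commute mult.left_commute)
    have "((P choose k) * Q) * (fact (P - k) * fact i ^ M) = (P choose k) * fact (P - k) * (Q * fact i ^ M)"
      by (simp only: mult_ac)
    also have "\<dots> = fact P" unfolding f2 using f3 by (simp only: mult_ac)
    finally have "HD_coeff P M i * (fact (P - k) * fact i ^ M) = ((P choose k) * Q) * (fact (P - k) * fact i ^ M)"
      using a by simp
    moreover have "fact (P - k) * fact i ^ M \<noteq> (0::nat)" by simp
    ultimately show ?thesis by simp
  qed
  have pp: "(\<Prod>j=1..N. pochhammer (of_nat j / of_nat M) i) * fact i * of_nat M ^ k = (fact k :: rat)"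
    using poch_prod[of N i] by (simp add: M_def k_def)
  have f2r: "(of_nat Q :: rat) * fact i ^ M = fact k"
    using arg_cong[OF f2, of "of_nat :: nat \<Rightarrow> rat"] by simp
  have fi0: "(fact i :: rat) \<noteq> 0" by simp
  have prodeq: "(\<Prod>j=1..N. pochhammer (of_nat j / of_nat M) i) / fact i ^ N = (of_nat Q / of_nat M ^ k :: rat)"
  proof -
    have "fact i ^ M = (fact i :: rat) * fact i ^ N" by (simp add: M_def)
    then have "(\<Prod>j=1..N. pochhammer (of_nat j / of_nat M) i) * fact i * of_nat M ^ k
        = (of_nat Q * fact i * fact i ^ N :: rat)" using pp f2r by (simp add: mult_ac)
    then show ?thesis using fi0 M0 by (simp add: field_simps)
  qed
  have pw: "(- of_nat M :: rat) ^ P = (- of_nat M) ^ (P - k) * (-1)^k * of_nat M ^ k"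
  proof -
    have "(- of_nat M :: rat) ^ P = (- of_nat M) ^ (P - k) * (- of_nat M) ^ k"
      using kP by (simp flip: power_add)
    then show ?thesis by (simp add: power_minus[of "of_nat M"] mult_ac)
  qed
  have diff: "of_nat (HD_coeff P M i) * (- of_nat M) ^ (P - k)
     - (- of_nat M) ^ P * ((1 - of_nat (m * p) * Hnum k) *
        (\<Prod>j = 1..N. pochhammer (of_nat j / of_nat M) i) / (fact i) ^ N)
     = (- of_nat M) ^ (P - k) * of_nat Q * X"
  proof -
    have r: "(1 - of_nat (m * p) * Hnum k) * (\<Prod>j = 1..N. pochhammer (of_nat j / of_nat M) i) / (fact i) ^ N
        = (1 - of_nat (m * p) * Hnum k) * (of_nat Q / of_nat M ^ k)"
      by (metis prodeq times_divide_eq_right)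
    show ?thesis unfolding r pw HQ X_def using M0 by (simp add: field_simps)
  qed
  have zM: "zl p ((- of_nat M) ^ (P - k))"
    using zl_pow[OF p zl_int[OF p, of "- int M"]] by simp
  have main: "zl p ((- of_nat M) ^ (P - k) * of_nat Q * X / of_nat p ^ 2)"
  proof (cases "k < p")
    case True
    have m1: "m \<ge> 1" using m by auto
    have "zl p (X / of_nat p ^ 2)" unfolding X_def P_def using lemmaA[OF p True m1] .
    then have "zl p ((- of_nat M) ^ (P - k) * of_nat Q * (X / of_nat p ^ 2))"
      using zM by (intro zl_mult[OF p] zl_nat[OF p])
    then show ?thesis by (simp add: mult.assoc)
  next
    case False
    then have pk: "p \<le> k" by simp
    have m2: "m = 2"
    proof (rule ccontr)
      assume "m \<noteq> 2"
      then have "m = 1" using m by auto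
      then show False using kP pk prime_gt_0_nat[OF p] unfolding P_def by simp
    qed
    have k2: "k \<le> 2*p - 1" using kP m2 unfolding P_def by simp
    have zX: "zl p (X / of_nat p)" unfolding X_def P_def m2 using lemmaC[OF p pk k2] by simp
    have ip: "i < p"
    proof -
      have "i * 3 \<le> k" unfolding k_def M_def using N by (intro mult_le_mono2) simp
      moreover have "2*p - 1 < 2*p" using prime_gt_0_nat[OF p] by simp
      ultimately show ?thesis using k2 by linarith
    qed
    have "p dvd fact k" using prime_dvd_fact_iff[OF p] pk by simp
    moreover have "\<not> p dvd fact i ^ M"
      using prime_dvd_fact_iff[OF p, of i] ip prime_dvd_power[OF p] by auto
    ultimately have "p dvd Q" using f2 p by (metis prime_dvd_mult_iff)
    then obtain Q' where Q': "Q = p * Q'" by blast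
    have "zl p ((- of_nat M) ^ (P - k) * of_nat Q' * (X / of_nat p))"
      using zM zX by (intro zl_mult[OF p] zl_nat[OF p])
    moreover have "(- of_nat M) ^ (P - k) * of_nat Q * X / of_nat p ^ 2
        = (- of_nat M) ^ (P - k) * of_nat Q' * (X / of_nat p)"
      unfolding Q' using p0 by (simp add: power2_eq_square)
    ultimately show ?thesis by simp
  qed
  show ?thesis using main diff unfolding P_def M_def k_def by simp
qed



theorem proposition3p10:
  fixes p N m :: nat
  assumes "prime p" and "p > 2" and "N \<ge> 2" and "\<not> p dvd (N + 1)"
    and "m \<in> {1, 2}"
  shows "poly_cong_mod_p2 p (HD (m * p - 1) (N + 1))
           (smult ((- of_nat (N + 1)) ^ (m * p - 1))
             (\<Sum>i = 0..(m * p - 1) div (N + 1).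
                monom ((1 - of_nat (m * p) * Hnum (i * (N + 1))) *
                       (\<Prod>j = 1..N. pochhammer (of_nat j / of_nat (N + 1)) i) /
                       (fact i) ^ N) (i * (N + 1))))"
  unfolding poly_cong_mod_p2_def in_Zloc_zl
proof
  fix n
  define S where "S = {0..(m * p - 1) div (N + 1)}"
  define a where "a i = (of_nat (HD_coeff (m * p - 1) (N + 1) i) * (- of_nat (N + 1)) ^ (m * p - 1 - i * (N + 1)) :: rat)" for i
  define b where "b i = ((1 - of_nat (m * p) * Hnum (i * (N + 1))) *
                       (\<Prod>j = 1..N. pochhammer (of_nat j / of_nat (N + 1)) i) /
                       (fact i) ^ N :: rat)" for i
  define c where "c = ((- of_nat (N + 1)) ^ (m * p - 1) :: rat)"
  have cL: "coeff (HD (m * p - 1) (N + 1)) n = (\<Sum>i\<in>S. if i * (N + 1) = n then a i else 0)"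
    unfolding HD_def S_def a_def by (simp only: coeff_sum coeff_monom)
  have cR: "coeff (smult c (\<Sum>i\<in>S. monom (b i) (i * (N + 1)))) n
      = (\<Sum>i\<in>S. if i * (N + 1) = n then c * b i else 0)"
    by (simp add: coeff_sum sum_distrib_left if_distrib cong: if_cong)
  have "(coeff (HD (m * p - 1) (N + 1)) n - coeff (smult c (\<Sum>i\<in>S. monom (b i) (i * (N + 1)))) n) / of_nat p ^ 2
      = (\<Sum>i\<in>S. if i * (N + 1) = n then (a i - c * b i) / of_nat p ^ 2 else 0)"
    unfolding cL cR sum_subtractf[symmetric] sum_divide_distrib
    by (intro sum.cong) auto
  moreover have "zl p \<dots>"
  proof (rule zl_sum[OF assms(1)])
    fix i assume "i \<in> S"
    then have i: "i \<le> (m * p - 1) div (N + 1)" unfolding S_def by simp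
    show "zl p (if i * (N + 1) = n then (a i - c * b i) / of_nat p ^ 2 else 0)"
    proof (cases "i * (N + 1) = n")
      case True
      show ?thesis unfolding if_P[OF True] a_def b_def c_def
        by (rule key[OF assms(1) assms(3) assms(5) i])
    next
      case False
      show ?thesis unfolding if_not_P[OF False] by (rule zl_0[OF assms(1)])
    qed
  qed
  ultimately show "zl p ((coeff (HD (m * p - 1) (N + 1)) n -
        coeff (smult ((- of_nat (N + 1)) ^ (m * p - 1))
             (\<Sum>i = 0..(m * p - 1) div (N + 1).
                monom ((1 - of_nat (m * p) * Hnum (i * (N + 1))) *
                       (\<Prod>j = 1..N. pochhammer (of_nat j / of_nat (N + 1)) i) /
                       (fact i) ^ N) (i * (N + 1)))) n) / of_nat p ^ 2)"
    unfolding S_def b_def c_def by simp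
qed

end
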